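(* Let $\mathcal{M}_1=\{A\in\mathbb{C}^{3\times3}\mid \deg(m_A)\le 2\}$. Then for all $A\in\mathcal{M}_1$: $c_3(A)=0$, $c_4(A)=0$, $d_2(A)^3=d_3(A)^2$, and $d_3(A)\,c_1(A)=d_2(A)\,c_2(A)$.
   Context: $m_A$ is the minimal polynomial of $A$. For $A\in\mathbb{C}^{3\times3}$: $c_1(A)=A-\frac13\mathrm{tr}(A)I_3$; $c_2(A)=c_1(c_1(A)^2)$; $d_2(A)=\frac16\mathrm{tr}(c_1(A)^2)$; $d_3(A)=\frac12\det(c_1(A))$; $c_3(A)$ is the cubic form $\underline{x}\mapsto\det(\underline{x}\,|\,A\underline{x}\,|\,A^2\underline{x})$ on $\mathbb{C}^3$ (matrix with these columns); $c_4(A)$ is the cubic form on row vectors $\underline{x}^T\mapsto\det$ of the matrix with rows $\underline{x}^T,\underline{x}^TA,\underline{x}^TA^2$. *)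

theory Defs
  imports "HOL-Analysis.Analysis"
begin

type_synonym cmat3 = "complex^3^3"

text \<open>Matrix powers w.r.t. the matrix product (the ring power on the type ^ is componentwise).\<close>
definition matpow :: "'a::comm_ring_1^'n^'n \<Rightarrow> nat \<Rightarrow> 'a^'n^'n" where
  "matpow A k = (((**) A) ^^ k) (mat 1)"

definition mscale :: "'a::comm_ring_1 \<Rightarrow> 'a^'n^'m \<Rightarrow> 'a^'n^'m" where
  "mscale c M = (\<chi> i j. c * M $ i $ j)"

definition poly_mat :: "'a::comm_ring_1 poly \<Rightarrow> 'a^'n^'n \<Rightarrow> 'a^'n^'n" where
  "poly_mat p A = (\<Sum>i\<le>degree p. mscale (coeff p i) (matpow A i))"

definition minpoly_mat :: "'a::field^'n^'n \<Rightarrow> 'a poly" where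
  "minpoly_mat A = (THE p. lead_coeff p = 1 \<and> poly_mat p A = 0 \<and>
                      (\<forall>q. poly_mat q A = 0 \<longrightarrow> p dvd q))"

definition c1 :: "cmat3 \<Rightarrow> cmat3" where
  "c1 A = A - mat (trace A / 3)"

definition c2 :: "cmat3 \<Rightarrow> cmat3" where
  "c2 A = c1 (c1 A ** c1 A)"

definition d2 :: "cmat3 \<Rightarrow> complex" where
  "d2 A = trace (c1 A ** c1 A) / 6"

definition d3 :: "cmat3 \<Rightarrow> complex" where
  "d3 A = det (c1 A) / 2"

definition c3 :: "cmat3 \<Rightarrow> complex^3 \<Rightarrow> complex" where
  "c3 A x = det (transpose (vector [x, A *v x, (A ** A) *v x] :: cmat3))"

definition c4 :: "cmat3 \<Rightarrow> complex^3 \<Rightarrow> complex" where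
  "c4 A x = det (vector [x, x v* A, x v* (A ** A)] :: cmat3)"

end

theory Submission
  imports Defs
begin

lemma mscale_0[simp]: "mscale 0 M = 0" by (simp add: mscale_def vec_eq_iff)
lemma mscale_zero_right[simp]: "mscale c 0 = 0" by (simp add: mscale_def vec_eq_iff)
lemma mscale_add: "mscale (a+b) M = mscale a M + mscale b M"
  by (simp add: mscale_def vec_eq_iff distrib_right)
lemma mscale_mscale: "mscale a (mscale b M) = mscale (a*b) M"
  by (simp add: mscale_def vec_eq_iff mult.assoc)
lemma mscale_sum: "mscale c (sum f S) = sum (\<lambda>i. mscale c (f i)) S"
  by (induction S rule: infinite_finite_induct) (auto simp: mscale_def vec_eq_iff distrib_left)
lemma mscale_1[simp]: "mscale 1 M = M" by (simp add: mscale_def vec_eq_iff)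
lemma mult_mscale: "(A::'a::comm_ring_1^'n^'m) ** mscale c M = mscale c (A ** M)"
  by (simp add: mscale_def vec_eq_iff matrix_matrix_mult_def sum_distrib_left algebra_simps)
lemma mult_sum: "(A::'a::comm_ring_1^'n^'m) ** sum f S = sum (\<lambda>i. A ** f i) S"
  by (induction S rule: infinite_finite_induct) (auto simp: matrix_add_ldistrib)

lemma matpow_0[simp]: "matpow A 0 = mat 1" by (simp add: matpow_def)
lemma matpow_Suc: "matpow A (Suc k) = A ** matpow A k" by (simp add: matpow_def)

lemma poly_mat_N:
  assumes "degree p < N"
  shows "poly_mat p A = (\<Sum>i<N. mscale (coeff p i) (matpow A i))"
proof -
  have e: "{..<N} = {..degree p} \<union> {Suc (degree p)..<N}" using assms by auto
  have "(\<Sum>i<N. mscale (coeff p i) (matpow A i)) = (\<Sum>i\<le>degree p. mscale (coeff p i) (matpow A i))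
      + (\<Sum>i\<in>{Suc (degree p)..<N}. mscale (coeff p i) (matpow A i))"
    unfolding e by (rule sum.union_disjoint) auto
  also have "(\<Sum>i\<in>{Suc (degree p)..<N}. mscale (coeff p i) (matpow A i)) = 0"
    by (intro sum.neutral) (auto simp: coeff_eq_0)
  finally show ?thesis by (simp add: poly_mat_def)
qed

lemma poly_mat_0[simp]: "poly_mat 0 A = 0" by (simp add: poly_mat_def)

lemma poly_mat_add: "poly_mat (p + q) A = poly_mat p A + poly_mat q A"
proof -
  define N where "N = Suc (degree p + degree q)"
  have "degree (p+q) < N" "degree p < N" "degree q < N" unfolding N_def
    using degree_add_le_max[of p q] by auto
  then show ?thesis by (simp add: poly_mat_N[where N=N] mscale_add sum.distrib)
qed

lemma poly_mat_smult: "poly_mat (smult c p) A = mscale c (poly_mat p A)"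
proof -
  define N where "N = Suc (degree p)"
  have "degree (smult c p) < N" "degree p < N" unfolding N_def using degree_smult_le[of c p] by auto
  then show ?thesis by (simp add: poly_mat_N[where N=N] mscale_sum mscale_mscale)
qed

lemma poly_mat_pCons: "poly_mat (pCons a p) A = mscale a (mat 1) + A ** poly_mat p A"
proof -
  define N where "N = Suc (degree p)"
  have "degree (pCons a p) < Suc N" "degree p < N" unfolding N_def by auto
  then show ?thesis
    by (simp add: poly_mat_N[where N=N] poly_mat_N[where N="Suc N"] sum.lessThan_Suc_shift
          mult_sum mult_mscale matpow_Suc del: sum.lessThan_Suc)
qed

lemma poly_mat_mult_zero:
  assumes "poly_mat p A = 0" shows "poly_mat (p * s) A = 0"
proof (induction s)
  case 0 then show ?case by simp
next
  case (pCons a s)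
  have "p * pCons a s = smult a p + pCons 0 (p * s)" by (simp add: mult_pCons_right)
  then show ?case using pCons assms by (simp add: poly_mat_add poly_mat_smult poly_mat_pCons)
qed

definition e2 :: "cmat3 \<Rightarrow> complex" where
 "e2 A = A$1$1*A$2$2 - A$1$2*A$2$1 + A$1$1*A$3$3 - A$1$3*A$3$1 + A$2$2*A$3$3 - A$2$3*A$3$2"

lemma CH3: "poly_mat [:-det A, e2 A, -trace A, 1:] A = 0"
  apply (simp add: poly_mat_pCons)
  apply (simp add: vec_eq_iff forall_3 matrix_matrix_mult_def sum_3 mat_def mscale_def det_3 trace_def e2_def)
  apply (simp_all add: algebra_simps)
  done

lemma monic_dvd_antisym:
  fixes p q :: "'a::field poly"
  assumes "lead_coeff p = 1" "lead_coeff q = 1" "p dvd q" "q dvd p"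
  shows "p = q"
proof -
  obtain k where k: "q = p * k" using assms(3) by (rule dvdE)
  obtain l where l: "p = q * l" using assms(4) by (rule dvdE)
  have nz: "p \<noteq> 0" "q \<noteq> 0" using assms by auto
  have k0: "k \<noteq> 0" using nz(2) unfolding k by auto
  have l0: "l \<noteq> 0" using nz(1) unfolding l by auto
  have d1: "degree q = degree p + degree k" unfolding k using nz(1) k0 by (rule degree_mult_eq)
  have d2: "degree p = degree q + degree l" unfolding l using nz(2) l0 by (rule degree_mult_eq)
  from d1 d2 have dk: "degree k = 0" by linarith
  have "lead_coeff q = lead_coeff p * lead_coeff k" unfolding k by (rule lead_coeff_mult)
  then have "lead_coeff k = 1" using assms by simp
  then have "coeff k 0 = 1" using dk by simp
  then have "k = 1" using degree_0_id[OF dk] by (simp add: one_pCons)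
  then show ?thesis using k by simp
qed

lemma CH3_nz: "[:-det A, e2 A, -trace A, (1::complex):] \<noteq> 0"
  by simp

lemma minpoly_spec:
  fixes A :: cmat3
  shows "lead_coeff (minpoly_mat A) = 1 \<and> poly_mat (minpoly_mat A) A = 0 \<and>
     (\<forall>q. poly_mat q A = 0 \<longrightarrow> minpoly_mat A dvd q)"
proof -
  define P where "P = (\<lambda>n. \<exists>p. p \<noteq> 0 \<and> poly_mat p A = 0 \<and> degree p = n)"
  have "P (degree [:-det A, e2 A, -trace A, 1:])" unfolding P_def using CH3[of A] CH3_nz[of A] by blast
  then obtain n where Pn: "P n" and nmin: "\<And>k. P k \<Longrightarrow> n \<le> k"
    by (metis ex_has_least_nat)
  then obtain p0 where p0: "p0 \<noteq> 0" "poly_mat p0 A = 0" "degree p0 = n" unfolding P_def by blast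
  define m where "m = smult (inverse (lead_coeff p0)) p0"
  have mlc: "lead_coeff m = 1" using p0(1) by (simp add: m_def)
  have m0: "poly_mat m A = 0" using p0 by (simp add: m_def poly_mat_smult)
  have mnz: "m \<noteq> 0" using mlc by auto
  have mdeg: "degree m = n" using p0(1,3) by (auto simp: m_def)
  have mdvd: "m dvd q" if q: "poly_mat q A = 0" for q
  proof (rule ccontr)
    assume nd: "\<not> m dvd q"
    have "q = m * (q div m) + q mod m" by simp
    then have "poly_mat q A = poly_mat (m * (q div m)) A + poly_mat (q mod m) A"
      by (metis poly_mat_add)
    then have r0: "poly_mat (q mod m) A = 0" using q poly_mat_mult_zero[OF m0] by simp
    have rnz: "q mod m \<noteq> 0" using nd by (simp add: mod_eq_0_iff_dvd)
    have "degree (q mod m) < n" using degree_mod_less_degree[OF mnz nd] mdeg by simp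
    moreover have "P (degree (q mod m))" unfolding P_def using r0 rnz by blast
    ultimately show False using nmin by fastforce
  qed
  have ex: "\<exists>!p. lead_coeff p = 1 \<and> poly_mat p A = 0 \<and> (\<forall>q. poly_mat q A = 0 \<longrightarrow> p dvd q)"
  proof (rule ex1I[of _ m])
    show "lead_coeff m = 1 \<and> poly_mat m A = 0 \<and> (\<forall>q. poly_mat q A = 0 \<longrightarrow> m dvd q)"
      using mlc m0 mdvd by blast
  next
    fix p assume p: "lead_coeff p = 1 \<and> poly_mat p A = 0 \<and> (\<forall>q. poly_mat q A = 0 \<longrightarrow> p dvd q)"
    show "p = m"
      by (rule monic_dvd_antisym) (use p m0 mdvd mlc in auto)
  qed
  show ?thesis unfolding minpoly_mat_def by (rule theI'[OF ex])
qed

lemma mult_zero_rt[simp]: "(A::'a::comm_ring_1^'n^'m) ** 0 = 0"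
  by (simp add: vec_eq_iff matrix_matrix_mult_def)

lemma quad_rel:
  fixes A :: cmat3
  assumes "degree (minpoly_mat A) \<le> 2"
  shows "\<exists>a b. A ** A = mscale a A + mscale b (mat 1)"
proof -
  define m where "m = minpoly_mat A"
  have ml: "lead_coeff m = 1" and m0: "poly_mat m A = 0" using minpoly_spec[of A] by (auto simp: m_def)
  have md: "degree m \<le> 2" using assms by (simp add: m_def)
  define c0 c1 c2 where "c0 = coeff m 0" "c1 = coeff m 1" "c2 = coeff m 2"
  have meq: "m = [:c0, c1, c2:]"
    by (rule poly_eqI) (use md in \<open>auto simp: c0_c1_c2_def coeff_pCons numeral_2_eq_2 split: nat.split intro!: coeff_eq_0\<close>)
  have "poly_mat [:c0, c1, c2:] A = 0" using m0 by (simp only: meq[symmetric])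
  then have E2: "mscale c0 (mat 1) + (mscale c1 A + mscale c2 (A ** A)) = 0"
    by (simp add: poly_mat_pCons matrix_add_ldistrib mult_mscale)
  have neg: "mscale (-c) M = - mscale c M" for c and M :: cmat3
    by (simp add: mscale_def vec_eq_iff)
  have "degree m = 2 \<or> degree m = 1 \<or> degree m = 0" using md by auto
  then show ?thesis
  proof (elim disjE)
    assume "degree m = 2"
    then have "c2 = 1" using ml c0_c1_c2_def by simp
    then have "A ** A = (mscale c0 (mat 1) + (mscale c1 A + mscale c2 (A ** A))) - mscale c0 (mat 1) - mscale c1 A"
      by (simp add: algebra_simps)
    also have "\<dots> = mscale (-c1) A + mscale (-c0) (mat 1)" using E2 by (simp add: neg)
    finally have "A ** A = mscale (-c1) A + mscale (-c0) (mat 1)" .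
    then show ?thesis by blast
  next
    assume d: "degree m = 1"
    then have "c2 = 0" "c1 = 1" using ml c0_c1_c2_def by (simp_all add: coeff_eq_0)
    then have "A = (mscale c0 (mat 1) + (mscale c1 A + mscale c2 (A ** A))) - mscale c0 (mat 1)"
      by (simp add: algebra_simps)
    also have "\<dots> = mscale (-c0) (mat 1)" using E2 by (simp add: neg)
    finally have eA: "A = mscale (-c0) (mat 1)" .
    have "A ** A = A ** mscale (-c0) (mat 1)" using eA by (rule arg_cong)
    also have "\<dots> = mscale (-c0) A" by (simp add: mult_mscale)
    finally have "A ** A = mscale (-c0) A + mscale 0 (mat 1)" by simp
    then show ?thesis by blast
  next
    assume d: "degree m = 0"
    then have "c2 = 0" "c1 = 0" "c0 = 1" using ml c0_c1_c2_def by (simp_all add: coeff_eq_0)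
    then have "(mat 1 :: cmat3) = 0" using E2 by simp
    then have "(mat 1 :: cmat3)$1$1 = 0" by simp
    then have False by (simp add: mat_def)
    then show ?thesis ..
  qed
qed

lemma c1_trace0: "trace (c1 A) = 0"
  by (simp add: c1_def trace_def sum_3 mat_def field_simps)

lemma sq_shift: "((A::cmat3) - mat t) ** (A - mat t) = A ** A - mscale (2*t) A + mscale (t^2) (mat 1)"
  by (simp add: vec_eq_iff forall_3 matrix_matrix_mult_def sum_3 mat_def mscale_def algebra_simps power2_eq_square)

lemma CHB: "trace (B::cmat3) = 0 \<Longrightarrow> B ** (B ** B) = mscale (trace (B ** B) / 2) B + mscale (det B) (mat 1)"
proof -
  assume t: "trace B = 0"
  then have s: "B$1$1 + B$2$2 + B$3$3 = 0" by (simp add: trace_def sum_3)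
  have "B$3$3 = (B$1$1 + B$2$2 + B$3$3) - B$1$1 - B$2$2" by (simp add: algebra_simps)
  then have b: "B$3$3 = - B$1$1 - B$2$2" using s by simp
  show ?thesis
    apply (simp add: vec_eq_iff forall_3 matrix_matrix_mult_def sum_3 mat_def mscale_def det_3 trace_def b)
    apply (simp_all add: field_simps)
    done
qed

lemma trB3: "trace (B::cmat3) = 0 \<Longrightarrow> trace (B ** (B ** B)) = 3 * det B"
proof -
  assume t: "trace B = 0"
  then have s: "B$1$1 + B$2$2 + B$3$3 = 0" by (simp add: trace_def sum_3)
  have "B$3$3 = (B$1$1 + B$2$2 + B$3$3) - B$1$1 - B$2$2" by (simp add: algebra_simps)
  then have b: "B$3$3 = - B$1$1 - B$2$2" using s by simp
  show ?thesis
    apply (simp add: matrix_matrix_mult_def sum_3 det_3 trace_def b)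
    apply (simp add: algebra_simps)
    done
qed

lemma c3_zero:
  assumes "A ** A = mscale a A + mscale b (mat 1)"
  shows "c3 A x = 0"
  unfolding c3_def assms
  by (simp add: det_3 transpose_def matrix_vector_mult_def sum_3 mscale_def mat_def algebra_simps)

lemma c4_zero:
  assumes "A ** A = mscale a A + mscale b (mat 1)"
  shows "c4 A x = 0"
  unfolding c4_def assms
  by (simp add: det_3 vector_matrix_mult_def sum_3 mscale_def mat_def algebra_simps)

lemma trace_lin: "trace (mscale p (B::cmat3) + mscale q (mat 1)) = p * trace B + 3 * q"
  by (simp add: trace_def sum_3 mscale_def mat_def algebra_simps)

lemma key:
  fixes B :: cmat3
  assumes t: "trace B = 0" and BB: "B ** B = mscale p B + mscale q (mat 1)"
  shows "(trace (B ** B) / 6) ^ 3 = (det B / 2) ^ 2 \<and>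
         mscale (det B / 2) B = mscale (trace (B ** B) / 6) (c1 (B ** B))"
proof -
  have tr2: "trace (B ** B) = 3 * q" unfolding BB trace_lin t by simp
  have "B ** (B ** B) = mscale p (B ** B) + mscale q B"
    by (simp only: BB matrix_add_ldistrib mult_mscale matrix_mul_rid)
  also have "\<dots> = mscale (p^2 + q) B + mscale (p*q) (mat 1)"
    unfolding BB by (simp add: vec_eq_iff mscale_def mat_def algebra_simps power2_eq_square)
  finally have cube: "B ** (B ** B) = mscale (p^2 + q) B + mscale (p*q) (mat 1)" .
  have "3 * det B = trace (mscale (p^2 + q) B + mscale (p*q) (mat 1))"
    using trB3[OF t] cube by simp
  also have "\<dots> = 3 * (p * q)" unfolding trace_lin t by simp
  finally have dB: "det B = p * q" by simp
  have ch: "mscale (3 * q / 2) B + mscale (p*q) (mat 1) = mscale (p^2 + q) B + mscale (p*q) (mat 1)"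
    using CHB[OF t] cube tr2 dB by simp
  have ent: "(p^2 - q/2) * B$i$j = 0" for i j
  proof -
    have "(mscale (3 * q / 2) B + mscale (p*q) (mat 1))$i$j = (mscale (p^2 + q) B + mscale (p*q) (mat 1))$i$j"
      using ch by simp
    then have "3 * q / 2 * B$i$j = (p^2 + q) * B$i$j" by (simp add: mscale_def)
    then show ?thesis by (auto simp: algebra_simps)
  qed
  show ?thesis
  proof (cases "B = 0")
    case True
    then show ?thesis by (simp add: c1_def trace_def det_3)
  next
    case False
    then obtain i j where "B$i$j \<noteq> 0" by (auto simp: vec_eq_iff)
    then have "p^2 - q/2 = 0" using ent[of i j] by simp
    then have qq: "q = 2 * p^2" by (simp add: field_simps)
    have "c1 (B ** B) = B ** B - mat (3 * q / 3)" by (simp only: c1_def tr2)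
    also have "\<dots> = mscale p B" unfolding BB qq by (simp add: vec_eq_iff mscale_def mat_def)
    finally have c1BB: "c1 (B ** B) = mscale p B" .
    show ?thesis unfolding c1BB tr2 dB qq
      by (simp add: mscale_mscale power2_eq_square field_simps eval_nat_numeral)
  qed
qed

theorem proposition4p4:
  fixes A :: "complex^3^3"
  assumes "degree (minpoly_mat A) \<le> 2"
  shows "c3 A = (\<lambda>_. 0) \<and> c4 A = (\<lambda>_. 0) \<and> d2 A ^ 3 = d3 A ^ 2
         \<and> mscale (d3 A) (c1 A) = mscale (d2 A) (c2 A)"
proof -
  obtain a b where ab: "A ** A = mscale a A + mscale b (mat 1)" using quad_rel[OF assms] by blast
  define t where "t = trace A / 3"
  have cA: "c1 A = A - mat t" by (simp add: c1_def t_def)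
  define p q where "p = a - 2*t" "q = (a - 2*t)*t + b + t^2"
  have BB: "c1 A ** c1 A = mscale p (c1 A) + mscale q (mat 1)"
    unfolding cA sq_shift ab p_q_def
    by (simp add: vec_eq_iff forall_3 mscale_def mat_def algebra_simps power2_eq_square)
  have K: "(trace (c1 A ** c1 A) / 6) ^ 3 = (det (c1 A) / 2) ^ 2 \<and>
         mscale (det (c1 A) / 2) (c1 A) = mscale (trace (c1 A ** c1 A) / 6) (c1 (c1 A ** c1 A))"
    by (rule key[OF c1_trace0 BB])
  show ?thesis
    using K c3_zero[OF ab] c4_zero[OF ab] unfolding d2_def d3_def c2_def by auto
qed

end
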